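(* Let $G$ be a $(P_5,\text{chair})$-free graph and let $C=v_1v_2v_3v_4v_5v_1$ be an induced $C_5$ in $G$. Then for every $1\le i\le 5$, every vertex in $S_4(i)\cup S_5$ is either complete or anticomplete to each connected component of $G[S^2_3(i)]$.
   Context: All graphs are finite and simple; $P_5$ is the path on 5 vertices; the chair is a $P_4$ plus a vertex adjacent to exactly one of the two middle vertices of the $P_4$; "$H$-free" means no induced subgraph isomorphic to $H$. Indices modulo 5; for $v\notin V(C)$ let $N_C(v)=N(v)\cap V(C)$. $S^2_3(i)=\{v\notin V(C): N_C(v)=\{v_{i-2},v_i,v_{i+2}\}\}$, $S_4(i)=\{v\notin V(C): N_C(v)=\{v_{i-2},v_{i-1},v_{i+1},v_{i+2}\}\}$, $S_5=\{v\notin V(C): N_C(v)=V(C)\}$. A vertex is complete (anticomplete) to a set if it is adjacent (nonadjacent) to every vertex of the set. *)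

theory Defs
  imports Main
begin

definition simple_graph :: "'a set \<Rightarrow> ('a \<Rightarrow> 'a \<Rightarrow> bool) \<Rightarrow> bool" where
  "simple_graph V E \<longleftrightarrow> finite V \<and> (\<forall>x y. E x y \<longrightarrow> x \<in> V \<and> y \<in> V)
     \<and> (\<forall>x y. E x y \<longrightarrow> E y x) \<and> (\<forall>x. \<not> E x x)"

definition has_induced :: "'a set \<Rightarrow> ('a \<Rightarrow> 'a \<Rightarrow> bool) \<Rightarrow> nat \<Rightarrow> (nat \<Rightarrow> nat \<Rightarrow> bool) \<Rightarrow> bool" where
  "has_induced V E k F \<longleftrightarrow> (\<exists>f. inj_on f {0..<k} \<and> f ` {0..<k} \<subseteq> V \<and>
      (\<forall>i<k. \<forall>j<k. E (f i) (f j) \<longleftrightarrow> F i j))"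

definition P5_adj :: "nat \<Rightarrow> nat \<Rightarrow> bool" where
  "P5_adj i j \<longleftrightarrow> i = j + 1 \<or> j = i + 1"

definition chair_adj :: "nat \<Rightarrow> nat \<Rightarrow> bool" where
  "chair_adj i j \<longleftrightarrow> (i < 4 \<and> j < 4 \<and> (i = j + 1 \<or> j = i + 1)) \<or> {i, j} = {1, 4}"

definition induced_C5 :: "'a set \<Rightarrow> ('a \<Rightarrow> 'a \<Rightarrow> bool) \<Rightarrow> (nat \<Rightarrow> 'a) \<Rightarrow> bool" where
  "induced_C5 V E v \<longleftrightarrow> inj_on v {0..<5} \<and> v ` {0..<5} \<subseteq> V \<and>
     (\<forall>i<5. \<forall>j<5. E (v i) (v j) \<longleftrightarrow> (j = (i + 1) mod 5 \<or> i = (j + 1) mod 5))"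

definition cv :: "(nat \<Rightarrow> 'a) \<Rightarrow> nat \<Rightarrow> 'a" where
  "cv v i = v (i mod 5)"

definition cyc_set :: "(nat \<Rightarrow> 'a) \<Rightarrow> 'a set" where
  "cyc_set v = v ` {0..<5}"

definition N_C :: "('a \<Rightarrow> 'a \<Rightarrow> bool) \<Rightarrow> (nat \<Rightarrow> 'a) \<Rightarrow> 'a \<Rightarrow> 'a set" where
  "N_C E v u = {x \<in> cyc_set v. E u x}"

text \<open>Indices: i-2 = i+3, i-1 = i+4 (mod 5).\<close>
definition S23 :: "'a set \<Rightarrow> ('a \<Rightarrow> 'a \<Rightarrow> bool) \<Rightarrow> (nat \<Rightarrow> 'a) \<Rightarrow> nat \<Rightarrow> 'a set" where
  "S23 V E v i = {u \<in> V - cyc_set v. N_C E v u = {cv v (i + 3), cv v i, cv v (i + 2)}}"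

definition S4 :: "'a set \<Rightarrow> ('a \<Rightarrow> 'a \<Rightarrow> bool) \<Rightarrow> (nat \<Rightarrow> 'a) \<Rightarrow> nat \<Rightarrow> 'a set" where
  "S4 V E v i = {u \<in> V - cyc_set v.
      N_C E v u = {cv v (i + 3), cv v (i + 4), cv v (i + 1), cv v (i + 2)}}"

definition S5 :: "'a set \<Rightarrow> ('a \<Rightarrow> 'a \<Rightarrow> bool) \<Rightarrow> (nat \<Rightarrow> 'a) \<Rightarrow> 'a set" where
  "S5 V E v = {u \<in> V - cyc_set v. N_C E v u = cyc_set v}"

definition components_in :: "('a \<Rightarrow> 'a \<Rightarrow> bool) \<Rightarrow> 'a set \<Rightarrow> 'a set set" where
  "components_in E S = {{y. (\<lambda>a b. a \<in> S \<and> b \<in> S \<and> E a b)\<^sup>*\<^sup>* x y} | x. x \<in> S}"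

definition complete_to :: "('a \<Rightarrow> 'a \<Rightarrow> bool) \<Rightarrow> 'a \<Rightarrow> 'a set \<Rightarrow> bool" where
  "complete_to E u K \<longleftrightarrow> (\<forall>y\<in>K. E u y)"

definition anticomplete_to :: "('a \<Rightarrow> 'a \<Rightarrow> bool) \<Rightarrow> 'a \<Rightarrow> 'a set \<Rightarrow> bool" where
  "anticomplete_to E u K \<longleftrightarrow> (\<forall>y\<in>K. \<not> E u y)"

end

theory Submission
  imports Defs
begin

lemma all5: "(\<forall>i<5::nat. P i) \<longleftrightarrow> P 0 \<and> P 1 \<and> P 2 \<and> P 3 \<and> P 4"
proof -
  have "{i. i < (5::nat)} = {0,1,2,3,4}" by auto
  then show ?thesis by (metis (mono_tags, lifting) empty_iff insert_iff mem_Collect_eq)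
qed

lemma key:
  assumes sg: "simple_graph V E" and nc: "\<not> has_induced V E 5 chair_adj"
    and V: "a \<in> V" "b \<in> V" "x \<in> V" "y \<in> V" "u \<in> V"
    and ab: "a \<noteq> b" "\<not> E a b" and ua: "E u a" "E u b"
    and xa: "\<not> E x a" "\<not> E x b" "\<not> E y a" "\<not> E y b"
    and xy: "E x y" "E u x" "\<not> E u y"
  shows False
proof -
  have sym: "\<And>p q. E p q \<Longrightarrow> E q p" and irr: "\<And>p. \<not> E p p"
    using sg unfolding simple_graph_def by blast+
  define f where "f = (!) [a,u,x,y,b]"
  have d: "a \<noteq> u" "a \<noteq> x" "a \<noteq> y" "b \<noteq> u" "b \<noteq> x" "b \<noteq> y" "u \<noteq> x" "u \<noteq> y" "x \<noteq> y"
    using assms sym irr by metis+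
  have e: "{0..<5::nat} = {0,1,2,3,4}" by auto
  have "has_induced V E 5 chair_adj"
    unfolding has_induced_def
  proof (intro exI conjI)
    show "inj_on f {0..<5}" unfolding e f_def inj_on_def using d ab by auto
    show "f ` {0..<5} \<subseteq> V" unfolding e f_def using V by auto
    show "\<forall>i<5. \<forall>j<5. E (f i) (f j) = chair_adj i j"
      unfolding all5 f_def chair_adj_def
      using assms sym irr by (simp add: doubleton_eq_iff) (metis sym)
  qed
  with nc show False by blast
qed

theorem mainTheorem6:
  fixes V :: "'a set" and E :: "'a \<Rightarrow> 'a \<Rightarrow> bool" and v :: "nat \<Rightarrow> 'a"
  assumes "simple_graph V E"
    and "\<not> has_induced V E 5 P5_adj"
    and "\<not> has_induced V E 5 chair_adj"
    and "induced_C5 V E v"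
  shows "\<forall>i<5. \<forall>u \<in> S4 V E v i \<union> S5 V E v. \<forall>K \<in> components_in E (S23 V E v i).
           complete_to E u K \<or> anticomplete_to E u K"
proof (intro allI impI ballI)
  fix i u K assume i: "i < (5::nat)" and u: "u \<in> S4 V E v i \<union> S5 V E v"
    and K: "K \<in> components_in E (S23 V E v i)"
  have sym: "\<And>p q. E p q \<Longrightarrow> E q p"
    using assms(1) unfolding simple_graph_def by blast
  have inj: "inj_on v {0..<5}" and vV: "v ` {0..<5} \<subseteq> V"
    and adj: "\<forall>i<5. \<forall>j<5. E (v i) (v j) \<longleftrightarrow> (j = (i + 1) mod 5 \<or> i = (j + 1) mod 5)"
    using assms(4) unfolding induced_C5_def by auto
  have cvin: "\<And>k. cv v k \<in> cyc_set v" unfolding cv_def cyc_set_def by auto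
  have cveq: "\<And>k l. cv v k = cv v l \<longleftrightarrow> k mod 5 = l mod 5"
    unfolding cv_def using inj by (auto simp: inj_on_def)
  define a where "a = cv v (i+1)"
  define b where "b = cv v (i+4)"
  have aV: "a \<in> V" "b \<in> V" using vV unfolding a_def b_def cv_def by auto
  have i5: "i = 0 \<or> i = 1 \<or> i = 2 \<or> i = 3 \<or> i = 4" using i by auto
  have nab: "\<not> E a b" unfolding a_def b_def cv_def
    using adj[rule_format, of "(i+1) mod 5" "(i+4) mod 5"] i5 by auto
  have ab: "a \<noteq> b" unfolding a_def b_def cveq using i5 by auto
  have uab: "E u a" "E u b" "u \<in> V"
    using u cvin unfolding S4_def S5_def N_C_def a_def b_def by blast+
  have xab: "\<And>x. x \<in> S23 V E v i \<Longrightarrow> \<not> E x a \<and> \<not> E x b \<and> x \<in> V"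
  proof -
    fix x assume x: "x \<in> S23 V E v i"
    hence N: "N_C E v x = {cv v (i + 3), cv v i, cv v (i + 2)}" and "x \<in> V"
      unfolding S23_def by auto
    have "E x a \<Longrightarrow> a \<in> N_C E v x" "E x b \<Longrightarrow> b \<in> N_C E v x"
      unfolding N_C_def using cvin a_def b_def by auto
    moreover have "a \<notin> {cv v (i + 3), cv v i, cv v (i + 2)}"
      "b \<notin> {cv v (i + 3), cv v i, cv v (i + 2)}"
      unfolding a_def b_def using i5 by (auto simp: cveq)
    ultimately show "\<not> E x a \<and> \<not> E x b \<and> x \<in> V" using N \<open>x \<in> V\<close> by auto
  qed
  have step: "\<And>p q. p \<in> S23 V E v i \<Longrightarrow> q \<in> S23 V E v i \<Longrightarrow> E p q \<Longrightarrow> E u p \<longleftrightarrow> E u q"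
  proof -
    fix p q assume p: "p \<in> S23 V E v i" and q: "q \<in> S23 V E v i" and pq: "E p q"
    show "E u p \<longleftrightarrow> E u q"
    proof (rule ccontr)
      assume "\<not> (E u p \<longleftrightarrow> E u q)"
      then consider "E u p" "\<not> E u q" | "E u q" "\<not> E u p" by blast
      then show False
      proof cases
        case 1 then show False
          using key[OF assms(1) assms(3) aV(1,2), of p q u] xab[OF p] xab[OF q] uab ab nab pq by blast
      next
        case 2 then show False
          using key[OF assms(1) assms(3) aV(1,2), of q p u] xab[OF p] xab[OF q] uab ab nab pq sym by blast
      qed
    qed
  qed
  obtain x0 where x0: "x0 \<in> S23 V E v i"
    and KK: "K = {y. (\<lambda>a b. a \<in> S23 V E v i \<and> b \<in> S23 V E v i \<and> E a b)\<^sup>*\<^sup>* x0 y}"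
    using K unfolding components_in_def by blast
  have all: "\<And>y. y \<in> K \<Longrightarrow> E u y \<longleftrightarrow> E u x0"
  proof -
    fix y assume "y \<in> K"
    hence "(\<lambda>a b. a \<in> S23 V E v i \<and> b \<in> S23 V E v i \<and> E a b)\<^sup>*\<^sup>* x0 y" using KK by simp
    then show "E u y \<longleftrightarrow> E u x0"
      by (induction rule: rtranclp_induct) (use step in auto)
  qed
  show "complete_to E u K \<or> anticomplete_to E u K"
    unfolding complete_to_def anticomplete_to_def using all by blast
qed

end
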